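(* Let $G=(V,E)$ be a simple undirected graph with $n=|V|$, let $0\le\epsilon\le1$, let $X\subseteq V$, and let $t=|T_\epsilon(X)|$ (assume $t>0$). Then $T_\epsilon(X)$ is an $\frac{n\epsilon}{t}$-near clique.
   Context: $\Gamma(v)$ denotes the set of neighbors of $v$. For $Y\subseteq V$ and $0\le\eta\le1$: $K_\eta(Y)=\{v\in V: |\Gamma(v)\cap Y|\ge(1-\eta)|Y|\}$, and $T_\epsilon(X)=K_\epsilon(K_{2\epsilon^2}(X))\cap K_{2\epsilon^2}(X)$. Each undirected edge $\{u,v\}$ is counted as two directed edges; for $\gamma\ge0$, a set $D\subseteq V$ is a $\gamma$-near clique if $|\{(u,v)\in D\times D:\{u,v\}\in E\}|\ge(1-\gamma)|D|(|D|-1)$. *)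

theory Defs
  imports Complex_Main
begin

definition simple_graph :: "'a set \<Rightarrow> 'a set set \<Rightarrow> bool" where
  "simple_graph V E \<longleftrightarrow> finite V \<and>
     (\<forall>e\<in>E. \<exists>u v. e = {u, v} \<and> u \<noteq> v \<and> u \<in> V \<and> v \<in> V)"

definition nbrs :: "'a set \<Rightarrow> 'a set set \<Rightarrow> 'a \<Rightarrow> 'a set" where
  "nbrs V E v = {u \<in> V. {u, v} \<in> E}"

definition Kset :: "'a set \<Rightarrow> 'a set set \<Rightarrow> real \<Rightarrow> 'a set \<Rightarrow> 'a set" where
  "Kset V E \<eta> Y = {v \<in> V. real (card (nbrs V E v \<inter> Y)) \<ge> (1 - \<eta>) * real (card Y)}"

definition Tset :: "'a set \<Rightarrow> 'a set set \<Rightarrow> real \<Rightarrow> 'a set \<Rightarrow> 'a set" where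
  "Tset V E \<epsilon> X = Kset V E \<epsilon> (Kset V E (2 * \<epsilon>^2) X) \<inter> Kset V E (2 * \<epsilon>^2) X"

text \<open>Ordered pairs (u,v) in D\<times>D whose underlying pair is an edge (each edge counted twice).\<close>
definition near_clique :: "'a set set \<Rightarrow> real \<Rightarrow> 'a set \<Rightarrow> bool" where
  "near_clique E \<gamma> D \<longleftrightarrow>
     real (card {(u, v) \<in> D \<times> D. {u, v} \<in> E}) \<ge> (1 - \<gamma>) * real (card D) * (real (card D) - 1)"

end

theory Submission
  imports Defs
begin

theorem lemma5p3:
  fixes V :: "'a set" and E :: "'a set set" and X :: "'a set" and \<epsilon> :: real
  assumes "simple_graph V E"
    and "0 \<le> \<epsilon>" and "\<epsilon> \<le> 1"
    and "X \<subseteq> V"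
    and "card (Tset V E \<epsilon> X) > 0"
  shows "near_clique E (real (card V) * \<epsilon> / real (card (Tset V E \<epsilon> X))) (Tset V E \<epsilon> X)"
proof -
  define Y where "Y = Kset V E (2 * \<epsilon>^2) X"
  define T where "T = Tset V E \<epsilon> X"
  define t where "t = card T"
  define n where "n = card V"
  have finV: "finite V" using assms(1) by (simp add: simple_graph_def)
  have YV: "Y \<subseteq> V" unfolding Y_def Kset_def by auto
  have TY: "T \<subseteq> Y" unfolding T_def Tset_def Y_def by auto
  have TK: "T \<subseteq> Kset V E \<epsilon> Y" unfolding T_def Tset_def Y_def by auto
  have finY: "finite Y" using YV finV finite_subset by blast
  have finT: "finite T" using TY finY finite_subset by blast
  have tpos: "t > 0" using assms(5) unfolding t_def T_def by simp
  have cY: "card Y \<le> n" unfolding n_def using YV finV card_mono by blast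
  have each: "real (card {v \<in> T. {u, v} \<in> E}) \<ge> real t - \<epsilon> * real n" if u: "u \<in> T" for u
  proof -
    let ?N = "nbrs V E u"
    have eq: "{v \<in> T. {u, v} \<in> E} = ?N \<inter> T"
      using TY YV unfolding nbrs_def by (auto simp: insert_commute)
    have uK: "real (card (?N \<inter> Y)) \<ge> (1 - \<epsilon>) * real (card Y)"
      using TK u unfolding Kset_def by auto
    have "card (T - ?N) \<le> card (Y - ?N)" using TY finY by (intro card_mono) auto
    also have "card (Y - ?N) = card Y - card (?N \<inter> Y)"
      using finY by (simp add: card_Diff_subset_Int Int_commute)
    finally have a: "real (card (T - ?N)) \<le> real (card Y) - real (card (?N \<inter> Y))"
      using card_mono[OF finY, of "?N \<inter> Y"] by auto
    have b: "card T = card (?N \<inter> T) + card (T - ?N)"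
      using finT card_Int_Diff[OF finT, of ?N] by (simp add: Int_commute)
    have "real (card Y) * \<epsilon> \<le> real n * \<epsilon>" using cY assms(2) by (simp add: mult_right_mono)
    then show ?thesis using a b uK eq unfolding t_def by (simp add: algebra_simps)
  qed
  have cnt: "card {(u, v) \<in> T \<times> T. {u, v} \<in> E} = (\<Sum>u\<in>T. card {v \<in> T. {u, v} \<in> E})"
  proof -
    have "{(u, v) \<in> T \<times> T. {u, v} \<in> E} = (\<Union>u\<in>T. (\<lambda>v. (u,v)) ` {v \<in> T. {u, v} \<in> E})"
      by auto
    also have "card \<dots> = (\<Sum>u\<in>T. card ((\<lambda>v. (u,v)) ` {v \<in> T. {u, v} \<in> E}))"
      using finT by (intro card_UN_disjoint) auto
    also have "\<dots> = (\<Sum>u\<in>T. card {v \<in> T. {u, v} \<in> E})"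
      by (intro sum.cong refl card_image) (auto simp: inj_on_def)
    finally show ?thesis .
  qed
  have L: "real (card {(u, v) \<in> T \<times> T. {u, v} \<in> E}) \<ge> real t * (real t - \<epsilon> * real n)"
  proof -
    have "real t * (real t - \<epsilon> * real n) = (\<Sum>u\<in>T. real t - \<epsilon> * real n)" by (simp add: t_def)
    also have "\<dots> \<le> (\<Sum>u\<in>T. real (card {v \<in> T. {u, v} \<in> E}))" using each by (intro sum_mono) auto
    finally show ?thesis unfolding cnt of_nat_sum .
  qed
  show ?thesis
  proof (cases "real n * \<epsilon> \<le> real t")
    case True
    have "(1 - real n * \<epsilon> / real t) * real t * (real t - 1) = (real t - real n * \<epsilon>) * (real t - 1)"
      using tpos by (simp add: field_simps)
    also have "\<dots> \<le> (real t - real n * \<epsilon>) * real t" using True by (intro mult_left_mono) auto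
    also have "\<dots> \<le> real (card {(u, v) \<in> T \<times> T. {u, v} \<in> E})" using L by (simp add: algebra_simps)
    finally show ?thesis unfolding near_clique_def T_def[symmetric] t_def[symmetric] n_def[symmetric] .
  next
    case False
    have g: "1 - real n * \<epsilon> / real t \<le> 0" using False tpos by (simp add: field_simps)
    have "0 \<le> real t * (real t - 1)" using tpos by simp
    then have "(1 - real n * \<epsilon> / real t) * (real t * (real t - 1)) \<le> 0"
      using g by (simp add: mult_nonpos_nonneg)
    then have "(1 - real n * \<epsilon> / real t) * real t * (real t - 1) \<le> real (card {(u, v) \<in> T \<times> T. {u, v} \<in> E})"
      by (simp add: mult.assoc)
    then show ?thesis unfolding near_clique_def T_def[symmetric] t_def[symmetric] n_def[symmetric] .
  qed
qed

end
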